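(* Let $\Gamma$ be a finite multiset of freshness and equality formulas well-formed in a context $\Sigma$. If $\Sigma;\Gamma\Rightarrow\bot$ is derivable in the sequent calculus $NL^{\Rightarrow}$, then $\Gamma$ is unsatisfiable, i.e. there is no interpretation $\theta$ with $\theta:\Sigma$ and $\theta\models A$ for every $A\in\Gamma$.
   Context: Sequent calculus $NL^{\Rightarrow}$. Types $\tau ::= \delta \mid \nu \mid \langle\nu\rangle\tau$ ($\delta$ data types, $\nu$ name types). Terms $t ::= x \mid \mathsf{a} \mid c \mid f(\vec t)$ over variables $x$ and a disjoint countably infinite set of name-symbols $\mathsf a$; the signature contains, for all $\nu,\tau$, swapping $(a\;b)\cdot t$, abstraction $\langle a\rangle t$ (type $\langle\nu\rangle\tau$), equality $t\approx u$, freshness $a\#t$, besides constants $c$, function symbols $f$ and relation symbols $p$. Formulas: $\top,\bot$, atoms, $\wedge,\vee,\supset,\forall x{:}\tau,\exists x{:}\tau$, and $\mathsf N\mathsf a{:}\nu.\phi$ (binding the name-symbol $\mathsf a$). Contexts $\Sigma::=\cdot\mid\Sigma,x{:}\tau\mid\Sigma\#\mathsf a{:}\nu$ (no symbol twice; $\Sigma\#\mathsf a{:}\nu$ means $\mathsf a$ is fresh for everything in $\Sigma$); $Tm_\Sigma$ = terms well-typed in $\Sigma$; $|\cdot|=\emptyset$, $|\Sigma,x{:}\tau|=|\Sigma|$, $|\Sigma\#\mathsf a{:}\nu|=|\Sigma|\cup\{\mathsf a\#t\mid t\in Tm_\Sigma\}$. Rules for $\Sigma;\Gamma\Rightarrow\Delta$: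 (i) classical G3c rules (atomic initial sequents, $\top R$, $\bot L$, context-sharing left/right rules for $\wedge,\vee,\supset,\forall,\exists$, eigenvariables added to $\Sigma$); (ii) $\mathsf N R$: from $\Sigma\#\mathsf a{:}\nu;\Gamma\Rightarrow\phi,\Delta$ infer $\Sigma;\Gamma\Rightarrow\mathsf N\mathsf a{:}\nu.\phi,\Delta$; $\mathsf N L$: from $\Sigma\#\mathsf a{:}\nu;\Gamma,\phi\Rightarrow\Delta$ infer $\Sigma;\Gamma,\mathsf N\mathsf a{:}\nu.\phi\Rightarrow\Delta$ ($\mathsf a\notin\Sigma$); (iii) $\approx R$: from $\Sigma;\Gamma,t\approx t\Rightarrow\Delta$ infer $\Sigma;\Gamma\Rightarrow\Delta$; $\approx S$: from $\Sigma;\Gamma,t\approx u,P(t),P(u)\Rightarrow\Delta$ infer $\Sigma;\Gamma,t\approx u,P(t)\Rightarrow\Delta$ ($P$ atomic); for each instance $\bigwedge_j P_j\supset\bigvee_{i\le m}Q_i$ ($m\ge0$) of (S1) $(a\;a)\cdot x\approx x$, (S2) $(a\;b)\cdot(a\;b)\cdot x\approx x$, (S3) $(a\;b)\cdot a\approx b$, (E1) $(a\;b)\cdot c\approx c$, (E2) $(a\;b)\cdot f(\vec t)\approx f((a\;b)\cdot\vec t)$, (E3) $p(\vec t)\supset p((a\;b)\cdot\vec t)$, (F1) $a\#x\wedge b\#x\supset(a\;b)\cdot x\approx x$, (F2) $a\#b$ ($a,b$ of distinct name types), (F3) $a\#a\supset\bot$, (F4) $a\#b\vee a\approx b$, (A1)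 $a\#y\wedge x\approx(a\;b)\cdot y\supset\langle a\rangle x\approx\langle b\rangle y$ (arbitrary well-typed terms), the rule: from $\Sigma;\Gamma,\vec P,Q_i\Rightarrow\Delta$ for all $i$ infer $\Sigma;\Gamma,\vec P\Rightarrow\Delta$; (A2) from $\Sigma;\Gamma,E,a\approx b,t\approx u\Rightarrow\Delta$ and $\Sigma;\Gamma,E,a\#u,t\approx(a\;b)\cdot u\Rightarrow\Delta$ infer $\Sigma;\Gamma,E\Rightarrow\Delta$, $E$ being $\langle a\rangle t\approx\langle b\rangle u$; (A3) from $\Sigma\vdash t:\langle\nu\rangle\sigma$ and $\Sigma,a{:}\nu,x{:}\sigma;\Gamma,t\approx\langle a\rangle x\Rightarrow\Delta$ ($a,x\notin\Sigma$) infer $\Sigma;\Gamma\Rightarrow\Delta$; (F) from $\Sigma\#\mathsf a{:}\nu;\Gamma\Rightarrow\Delta$ ($\mathsf a\notin\Sigma$) infer $\Sigma;\Gamma\Rightarrow\Delta$; ($\Sigma\#$) from $\Sigma;\Gamma,\mathsf a\#t\Rightarrow\Delta$ with $\mathsf a\#t\in|\Sigma|$ infer $\Sigma;\Gamma\Rightarrow\Delta$. Herbrand model. $Tm$: ground swapping-free terms $t::=\mathsf a\mid c\mid f(\vec t)\mid\langle\mathsf a\rangle t$. Syntactic swapping: $(\mathsf a\;\mathsf b)\cdot\mathsf a=\mathsf b$, $(\mathsf a\;\mathsf b)\cdot\mathsf b=\mathsf a$, $(\mathsf a\;\mathsf b)\cdot\mathsf c=\mathsf c$ ($\mathsf c\ne\mathsf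 a,\mathsf b$), $(\mathsf a\;\mathsf b)\cdot c=c$, $(\mathsf a\;\mathsf b)\cdot f(\vec t)=f((\mathsf a\;\mathsf b)\cdot\vec t)$, $(\mathsf a\;\mathsf b)\cdot\langle\mathsf c\rangle t=\langle(\mathsf a\;\mathsf b)\cdot\mathsf c\rangle((\mathsf a\;\mathsf b)\cdot t)$. Freshness (inductive): $\mathsf a\#\mathsf b$ if $\mathsf a\ne\mathsf b$; $\mathsf a\#c$; $\mathsf a\#f(\vec t)$ if $\mathsf a\#t_i$ for all $i$; $\mathsf a\#\langle\mathsf a\rangle t$; $\mathsf a\#\langle\mathsf b\rangle t$ if $\mathsf a\ne\mathsf b$ and $\mathsf a\#t$. Equality (inductive): $\mathsf a\approx\mathsf a$; $c\approx c$; $f(\vec t)\approx f(\vec u)$ if $t_i\approx u_i$ for all $i$; $\langle\mathsf a\rangle t\approx\langle\mathsf a\rangle u$ if $t\approx u$; $\langle\mathsf a\rangle t\approx\langle\mathsf b\rangle u$ if $\mathsf a\ne\mathsf b$, $\mathsf a\#u$ and $t\approx(\mathsf a\;\mathsf b)\cdot u$. This $\approx$ is an equivalence relation and $\approx,\#$ are preserved by swapping; $NTm=Tm/{\approx}$. An interpretation $\theta$ maps variables to elements of $NTm$ and extends to terms by $\theta(\mathsf a)=\mathsf a$, $\theta(c)=c$, $\theta(f(\vec t))=f(\theta(t_1),\dots,\theta(t_n))$, $\theta((a\;b)\cdot t)=(\theta(a)\;\theta(b))\cdot\theta(t)$, $\theta(\langle a\rangle t)=\langle\theta(a)\rangle\theta(t)$.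 $\theta\models t\approx u$ iff $\theta(t)\approx\theta(u)$; $\theta\models a\#t$ iff $\theta(a)\#\theta(t)$. $\theta:\Sigma$ means $\theta(x)$ has the type $\Sigma$ assigns to $x$ for each variable $x$ of $\Sigma$, and $\mathsf a\#\theta(x)$ for each $\mathsf a\#x\in|\Sigma|$. *)

theory Defs
  imports Main "HOL-Library.Multiset"
begin

section \<open>Syntax of nominal logic (locally nameless representation)\<close>

datatype ('d, 'n) ty = Data 'd | NameT 'n | AbsT 'n "('d, 'n) ty"

text \<open>Name-symbols are sorted: a name-symbol of name type nu is a pair (nu, k).
  There are countably infinitely many name-symbols of each name type.\<close>
type_synonym 'n nsym = "'n \<times> nat"

text \<open>Var x are (free) variables, Nm a are (free) name-symbols,
  Bnd i is a locally-nameless bound occurrence (bound by the i-th enclosing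
  quantifier / N-binder of a formula; never occurs in well-typed terms).
  Swap a b t is (a b).t and Ab a t is the abstraction <a>t.\<close>
datatype ('c, 'f, 'n) trm =
    Var nat | Bnd nat | Nm "'n nsym" | Con 'c | Fn 'f "('c, 'f, 'n) trm list"
  | Swap "('c, 'f, 'n) trm" "('c, 'f, 'n) trm" "('c, 'f, 'n) trm"
  | Ab "('c, 'f, 'n) trm" "('c, 'f, 'n) trm"

text \<open>Formulas. Eq t u is t = u (nominal equality), Fr a t is a # t;
  All, Ex bind a variable of the given type, New bind a name-symbol.\<close>
datatype ('c, 'f, 'p, 'd, 'n) fm =
    Top | Bot
  | Rel 'p "('c, 'f, 'n) trm list"
  | Eq "('c, 'f, 'n) trm" "('c, 'f, 'n) trm"
  | Fr "('c, 'f, 'n) trm" "('c, 'f, 'n) trm"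
  | And "('c, 'f, 'p, 'd, 'n) fm" "('c, 'f, 'p, 'd, 'n) fm"
  | Or "('c, 'f, 'p, 'd, 'n) fm" "('c, 'f, 'p, 'd, 'n) fm"
  | Imp "('c, 'f, 'p, 'd, 'n) fm" "('c, 'f, 'p, 'd, 'n) fm"
  | All "('d, 'n) ty" "('c, 'f, 'p, 'd, 'n) fm"
  | Ex "('d, 'n) ty" "('c, 'f, 'p, 'd, 'n) fm"
  | New 'n "('c, 'f, 'p, 'd, 'n) fm"

fun is_atom :: "('c, 'f, 'p, 'd, 'n) fm \<Rightarrow> bool" where
  "is_atom (Rel p ts) = True"
| "is_atom (Eq t u) = True"
| "is_atom (Fr a t) = True"
| "is_atom _ = False"

fun is_eqfr :: "('c, 'f, 'p, 'd, 'n) fm \<Rightarrow> bool" where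
  "is_eqfr (Eq t u) = True"
| "is_eqfr (Fr a t) = True"
| "is_eqfr _ = False"

primrec topen :: "nat \<Rightarrow> ('c, 'f, 'n) trm \<Rightarrow> ('c, 'f, 'n) trm \<Rightarrow> ('c, 'f, 'n) trm" where
  "topen k s (Var x) = Var x"
| "topen k s (Bnd i) = (if i = k then s else Bnd i)"
| "topen k s (Nm a) = Nm a"
| "topen k s (Con c) = Con c"
| "topen k s (Fn f ts) = Fn f (map (topen k s) ts)"
| "topen k s (Swap a b t) = Swap (topen k s a) (topen k s b) (topen k s t)"
| "topen k s (Ab a t) = Ab (topen k s a) (topen k s t)"

primrec fopen :: "nat \<Rightarrow> ('c, 'f, 'n) trm \<Rightarrow> ('c, 'f, 'p, 'd, 'n) fm \<Rightarrow> ('c, 'f, 'p, 'd, 'n) fm" where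
  "fopen k s Top = Top"
| "fopen k s Bot = Bot"
| "fopen k s (Rel p ts) = Rel p (map (topen k s) ts)"
| "fopen k s (Eq t u) = Eq (topen k s t) (topen k s u)"
| "fopen k s (Fr a t) = Fr (topen k s a) (topen k s t)"
| "fopen k s (And A B) = And (fopen k s A) (fopen k s B)"
| "fopen k s (Or A B) = Or (fopen k s A) (fopen k s B)"
| "fopen k s (Imp A B) = Imp (fopen k s A) (fopen k s B)"
| "fopen k s (All \<tau> A) = All \<tau> (fopen (Suc k) s A)"
| "fopen k s (Ex \<tau> A) = Ex \<tau> (fopen (Suc k) s A)"
| "fopen k s (New \<nu> A) = New \<nu> (fopen (Suc k) s A)"

text \<open>inst A t = A[t/bound variable 0]; also used for P(t) with P an atom
  whose hole is Bnd 0.\<close>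
abbreviation inst :: "('c, 'f, 'p, 'd, 'n) fm \<Rightarrow> ('c, 'f, 'n) trm \<Rightarrow> ('c, 'f, 'p, 'd, 'n) fm" where
  "inst A t \<equiv> fopen 0 t A"

datatype ('c, 'f, 'p, 'd, 'n) sig =
  Sig (cty: "'c \<Rightarrow> 'd") (fty: "'f \<Rightarrow> ('d, 'n) ty list \<times> 'd") (pty: "'p \<Rightarrow> ('d, 'n) ty list")

text \<open>Context entries: x:tau, or #a:nu (the sort nu of a is part of a).
  Contexts are lists, extended at the right end.\<close>
datatype ('d, 'n) centry = CVar nat "('d, 'n) ty" | CNm "'n nsym"

type_synonym ('d, 'n) ctx = "('d, 'n) centry list"

primrec csym :: "('d, 'n) centry \<Rightarrow> nat + 'n nsym" where
  "csym (CVar x \<tau>) = Inl x"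
| "csym (CNm a) = Inr a"

definition ctx_ok :: "('d, 'n) ctx \<Rightarrow> bool" where
  "ctx_ok G \<longleftrightarrow> distinct (map csym G)"

definition var_in :: "nat \<Rightarrow> ('d, 'n) ctx \<Rightarrow> bool" where
  "var_in x G \<longleftrightarrow> Inl x \<in> csym ` set G"

definition nm_in :: "'n nsym \<Rightarrow> ('d, 'n) ctx \<Rightarrow> bool" where
  "nm_in a G \<longleftrightarrow> Inr a \<in> csym ` set G"

inductive has_ty :: "('c, 'f, 'p, 'd, 'n) sig \<Rightarrow> ('d, 'n) ctx \<Rightarrow> ('c, 'f, 'n) trm \<Rightarrow> ('d, 'n) ty \<Rightarrow> bool"
  for S :: "('c, 'f, 'p, 'd, 'n) sig" where
  ty_var: "CVar x \<tau> \<in> set G \<Longrightarrow> has_ty S G (Var x) \<tau>"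
| ty_nm: "CNm a \<in> set G \<Longrightarrow> has_ty S G (Nm a) (NameT (fst a))"
| ty_con: "has_ty S G (Con c) (Data (cty S c))"
| ty_fn: "list_all2 (has_ty S G) ts (fst (fty S f)) \<Longrightarrow> has_ty S G (Fn f ts) (Data (snd (fty S f)))"
| ty_swap: "has_ty S G a (NameT \<nu>) \<Longrightarrow> has_ty S G b (NameT \<nu>) \<Longrightarrow> has_ty S G t \<tau>
            \<Longrightarrow> has_ty S G (Swap a b t) \<tau>"
| ty_abs: "has_ty S G a (NameT \<nu>) \<Longrightarrow> has_ty S G t \<tau> \<Longrightarrow> has_ty S G (Ab a t) (AbsT \<nu> \<tau>)"

fun wf_atom :: "('c, 'f, 'p, 'd, 'n) sig \<Rightarrow> ('d, 'n) ctx \<Rightarrow> ('c, 'f, 'p, 'd, 'n) fm \<Rightarrow> bool" where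
  "wf_atom S G (Rel p ts) = list_all2 (has_ty S G) ts (pty S p)"
| "wf_atom S G (Eq t u) = (\<exists>\<tau>. has_ty S G t \<tau> \<and> has_ty S G u \<tau>)"
| "wf_atom S G (Fr a t) = (\<exists>\<nu> \<tau>. has_ty S G a (NameT \<nu>) \<and> has_ty S G t \<tau>)"
| "wf_atom S G _ = False"

text \<open>The set |Sigma| of freshness constraints, as pairs (a, t) standing for a # t:
  |Sigma # a:nu| = |Sigma| \<union> {a # t | t \<in> Tm_Sigma}, and variables add nothing.\<close>
inductive_set ctx_fresh :: "('c, 'f, 'p, 'd, 'n) sig \<Rightarrow> ('d, 'n) ctx \<Rightarrow> ('n nsym \<times> ('c, 'f, 'n) trm) set"
  for S :: "('c, 'f, 'p, 'd, 'n) sig" and G :: "('d, 'n) ctx" where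
  "G = G1 @ [CNm a] @ G2 \<Longrightarrow> has_ty S G1 t \<tau> \<Longrightarrow> (a, t) \<in> ctx_fresh S G"

section \<open>Axiom instances (hypotheses P_j and disjuncts Q_i)\<close>

inductive ax_inst :: "('c, 'f, 'p, 'd, 'n) sig \<Rightarrow> ('d, 'n) ctx
   \<Rightarrow> ('c, 'f, 'p, 'd, 'n) fm list \<Rightarrow> ('c, 'f, 'p, 'd, 'n) fm list \<Rightarrow> bool"
  for S :: "('c, 'f, 'p, 'd, 'n) sig" and G :: "('d, 'n) ctx" where
  S1: "has_ty S G a (NameT \<nu>) \<Longrightarrow> has_ty S G t \<tau> \<Longrightarrow> ax_inst S G [] [Eq (Swap a a t) t]"
| S2: "has_ty S G a (NameT \<nu>) \<Longrightarrow> has_ty S G b (NameT \<nu>) \<Longrightarrow> has_ty S G t \<tau>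
       \<Longrightarrow> ax_inst S G [] [Eq (Swap a b (Swap a b t)) t]"
| S3: "has_ty S G a (NameT \<nu>) \<Longrightarrow> has_ty S G b (NameT \<nu>) \<Longrightarrow> ax_inst S G [] [Eq (Swap a b a) b]"
| E1: "has_ty S G a (NameT \<nu>) \<Longrightarrow> has_ty S G b (NameT \<nu>) \<Longrightarrow> ax_inst S G [] [Eq (Swap a b (Con c)) (Con c)]"
| E2_fn: "has_ty S G a (NameT \<nu>) \<Longrightarrow> has_ty S G b (NameT \<nu>) \<Longrightarrow> has_ty S G (Fn f ts) \<tau>
       \<Longrightarrow> ax_inst S G [] [Eq (Swap a b (Fn f ts)) (Fn f (map (Swap a b) ts))]"
| E2_swap: "has_ty S G a (NameT \<nu>) \<Longrightarrow> has_ty S G b (NameT \<nu>) \<Longrightarrow> has_ty S G (Swap c d t) \<tau>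
       \<Longrightarrow> ax_inst S G [] [Eq (Swap a b (Swap c d t)) (Swap (Swap a b c) (Swap a b d) (Swap a b t))]"
| E2_abs: "has_ty S G a (NameT \<nu>) \<Longrightarrow> has_ty S G b (NameT \<nu>) \<Longrightarrow> has_ty S G (Ab c t) \<tau>
       \<Longrightarrow> ax_inst S G [] [Eq (Swap a b (Ab c t)) (Ab (Swap a b c) (Swap a b t))]"
| E3_rel: "has_ty S G a (NameT \<nu>) \<Longrightarrow> has_ty S G b (NameT \<nu>) \<Longrightarrow> wf_atom S G (Rel p ts)
       \<Longrightarrow> ax_inst S G [Rel p ts] [Rel p (map (Swap a b) ts)]"
| E3_eq: "has_ty S G a (NameT \<nu>) \<Longrightarrow> has_ty S G b (NameT \<nu>) \<Longrightarrow> wf_atom S G (Eq t u)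
       \<Longrightarrow> ax_inst S G [Eq t u] [Eq (Swap a b t) (Swap a b u)]"
| E3_fr: "has_ty S G a (NameT \<nu>) \<Longrightarrow> has_ty S G b (NameT \<nu>) \<Longrightarrow> wf_atom S G (Fr c t)
       \<Longrightarrow> ax_inst S G [Fr c t] [Fr (Swap a b c) (Swap a b t)]"
| F1: "has_ty S G a (NameT \<nu>) \<Longrightarrow> has_ty S G b (NameT \<nu>) \<Longrightarrow> has_ty S G t \<tau>
       \<Longrightarrow> ax_inst S G [Fr a t, Fr b t] [Eq (Swap a b t) t]"
| F2: "has_ty S G a (NameT \<nu>) \<Longrightarrow> has_ty S G b (NameT \<nu>') \<Longrightarrow> \<nu> \<noteq> \<nu>'
       \<Longrightarrow> ax_inst S G [] [Fr a b]"
| F3: "has_ty S G a (NameT \<nu>) \<Longrightarrow> ax_inst S G [Fr a a] []"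
| F4: "has_ty S G a (NameT \<nu>) \<Longrightarrow> has_ty S G b (NameT \<nu>) \<Longrightarrow> ax_inst S G [] [Fr a b, Eq a b]"
| A1: "has_ty S G a (NameT \<nu>) \<Longrightarrow> has_ty S G b (NameT \<nu>) \<Longrightarrow> has_ty S G t \<tau> \<Longrightarrow> has_ty S G u \<tau>
       \<Longrightarrow> ax_inst S G [Fr a u, Eq t (Swap a b u)] [Eq (Ab a t) (Ab b u)]"

section \<open>The sequent calculus NL=>\<close>

inductive deriv :: "('c, 'f, 'p, 'd, 'n) sig \<Rightarrow> ('d, 'n) ctx
   \<Rightarrow> ('c, 'f, 'p, 'd, 'n) fm multiset \<Rightarrow> ('c, 'f, 'p, 'd, 'n) fm multiset \<Rightarrow> bool"
  for S :: "('c, 'f, 'p, 'd, 'n) sig" where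
  init: "is_atom P \<Longrightarrow> deriv S G (add_mset P \<Gamma>) (add_mset P \<Delta>)"
| topR: "deriv S G \<Gamma> (add_mset Top \<Delta>)"
| botL: "deriv S G (add_mset Bot \<Gamma>) \<Delta>"
| andL: "deriv S G (add_mset A (add_mset B \<Gamma>)) \<Delta> \<Longrightarrow> deriv S G (add_mset (And A B) \<Gamma>) \<Delta>"
| andR: "deriv S G \<Gamma> (add_mset A \<Delta>) \<Longrightarrow> deriv S G \<Gamma> (add_mset B \<Delta>)
         \<Longrightarrow> deriv S G \<Gamma> (add_mset (And A B) \<Delta>)"
| orL: "deriv S G (add_mset A \<Gamma>) \<Delta> \<Longrightarrow> deriv S G (add_mset B \<Gamma>) \<Delta>
         \<Longrightarrow> deriv S G (add_mset (Or A B) \<Gamma>) \<Delta>"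
| orR: "deriv S G \<Gamma> (add_mset A (add_mset B \<Delta>)) \<Longrightarrow> deriv S G \<Gamma> (add_mset (Or A B) \<Delta>)"
| impL: "deriv S G \<Gamma> (add_mset A \<Delta>) \<Longrightarrow> deriv S G (add_mset B \<Gamma>) \<Delta>
         \<Longrightarrow> deriv S G (add_mset (Imp A B) \<Gamma>) \<Delta>"
| impR: "deriv S G (add_mset A \<Gamma>) (add_mset B \<Delta>) \<Longrightarrow> deriv S G \<Gamma> (add_mset (Imp A B) \<Delta>)"
| allL: "has_ty S G t \<tau> \<Longrightarrow> deriv S G (add_mset (inst A t) (add_mset (All \<tau> A) \<Gamma>)) \<Delta>
         \<Longrightarrow> deriv S G (add_mset (All \<tau> A) \<Gamma>) \<Delta>"
| allR: "\<not> var_in y G \<Longrightarrow> deriv S (G @ [CVar y \<tau>]) \<Gamma> (add_mset (inst A (Var y)) \<Delta>)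
         \<Longrightarrow> deriv S G \<Gamma> (add_mset (All \<tau> A) \<Delta>)"
| exL: "\<not> var_in y G \<Longrightarrow> deriv S (G @ [CVar y \<tau>]) (add_mset (inst A (Var y)) \<Gamma>) \<Delta>
         \<Longrightarrow> deriv S G (add_mset (Ex \<tau> A) \<Gamma>) \<Delta>"
| exR: "has_ty S G t \<tau> \<Longrightarrow> deriv S G \<Gamma> (add_mset (inst A t) (add_mset (Ex \<tau> A) \<Delta>))
         \<Longrightarrow> deriv S G \<Gamma> (add_mset (Ex \<tau> A) \<Delta>)"
| newR: "\<not> nm_in a G \<Longrightarrow> fst a = \<nu> \<Longrightarrow> deriv S (G @ [CNm a]) \<Gamma> (add_mset (inst A (Nm a)) \<Delta>)
         \<Longrightarrow> deriv S G \<Gamma> (add_mset (New \<nu> A) \<Delta>)"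
| newL: "\<not> nm_in a G \<Longrightarrow> fst a = \<nu> \<Longrightarrow> deriv S (G @ [CNm a]) (add_mset (inst A (Nm a)) \<Gamma>) \<Delta>
         \<Longrightarrow> deriv S G (add_mset (New \<nu> A) \<Gamma>) \<Delta>"
| eqR: "has_ty S G t \<tau> \<Longrightarrow> deriv S G (add_mset (Eq t t) \<Gamma>) \<Delta> \<Longrightarrow> deriv S G \<Gamma> \<Delta>"
| eqS: "is_atom P \<Longrightarrow> deriv S G (\<Gamma> + {#Eq t u, inst P t, inst P u#}) \<Delta>
         \<Longrightarrow> deriv S G (\<Gamma> + {#Eq t u, inst P t#}) \<Delta>"
| ax: "ax_inst S G Ps Qs \<Longrightarrow> (\<forall>Q \<in> set Qs. deriv S G (add_mset Q (\<Gamma> + mset Ps)) \<Delta>)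
         \<Longrightarrow> deriv S G (\<Gamma> + mset Ps) \<Delta>"
| A2: "deriv S G (\<Gamma> + {#Eq (Ab a t) (Ab b u), Eq a b, Eq t u#}) \<Delta>
       \<Longrightarrow> deriv S G (\<Gamma> + {#Eq (Ab a t) (Ab b u), Fr a u, Eq t (Swap a b u)#}) \<Delta>
       \<Longrightarrow> deriv S G (add_mset (Eq (Ab a t) (Ab b u)) \<Gamma>) \<Delta>"
| A3: "has_ty S G t (AbsT \<nu> \<sigma>) \<Longrightarrow> \<not> var_in a G \<Longrightarrow> \<not> var_in x G \<Longrightarrow> a \<noteq> x
       \<Longrightarrow> deriv S (G @ [CVar a (NameT \<nu>), CVar x \<sigma>]) (add_mset (Eq t (Ab (Var a) (Var x))) \<Gamma>) \<Delta>
       \<Longrightarrow> deriv S G \<Gamma> \<Delta>"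
| Fresh: "\<not> nm_in a G \<Longrightarrow> deriv S (G @ [CNm a]) \<Gamma> \<Delta> \<Longrightarrow> deriv S G \<Gamma> \<Delta>"
| CtxFr: "(a, t) \<in> ctx_fresh S G \<Longrightarrow> deriv S G (add_mset (Fr (Nm a) t) \<Gamma>) \<Delta> \<Longrightarrow> deriv S G \<Gamma> \<Delta>"

section \<open>The Herbrand model\<close>

datatype ('c, 'f, 'n) gtm = GNm "'n nsym" | GCon 'c | GFn 'f "('c, 'f, 'n) gtm list"
  | GAb "'n nsym" "('c, 'f, 'n) gtm"

inductive gty :: "('c, 'f, 'p, 'd, 'n) sig \<Rightarrow> ('c, 'f, 'n) gtm \<Rightarrow> ('d, 'n) ty \<Rightarrow> bool"
  for S :: "('c, 'f, 'p, 'd, 'n) sig" where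
  "gty S (GNm a) (NameT (fst a))"
| "gty S (GCon c) (Data (cty S c))"
| "list_all2 (gty S) gs (fst (fty S f)) \<Longrightarrow> gty S (GFn f gs) (Data (snd (fty S f)))"
| "gty S g \<tau> \<Longrightarrow> gty S (GAb a g) (AbsT (fst a) \<tau>)"

definition nswap :: "'n nsym \<Rightarrow> 'n nsym \<Rightarrow> 'n nsym \<Rightarrow> 'n nsym" where
  "nswap a b c = (if c = a then b else if c = b then a else c)"

primrec gswap :: "'n nsym \<Rightarrow> 'n nsym \<Rightarrow> ('c, 'f, 'n) gtm \<Rightarrow> ('c, 'f, 'n) gtm" where
  "gswap a b (GNm c) = GNm (nswap a b c)"
| "gswap a b (GCon c) = GCon c"
| "gswap a b (GFn f ts) = GFn f (map (gswap a b) ts)"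
| "gswap a b (GAb c t) = GAb (nswap a b c) (gswap a b t)"

inductive gfresh :: "'n nsym \<Rightarrow> ('c, 'f, 'n) gtm \<Rightarrow> bool" where
  "a \<noteq> b \<Longrightarrow> gfresh a (GNm b)"
| "gfresh a (GCon c)"
| "(\<forall>t \<in> set ts. gfresh a t) \<Longrightarrow> gfresh a (GFn f ts)"
| "gfresh a (GAb a t)"
| "a \<noteq> b \<Longrightarrow> gfresh a t \<Longrightarrow> gfresh a (GAb b t)"

inductive geq :: "('c, 'f, 'n) gtm \<Rightarrow> ('c, 'f, 'n) gtm \<Rightarrow> bool" where
  "geq (GNm a) (GNm a)"
| "geq (GCon c) (GCon c)"
| "list_all2 geq ts us \<Longrightarrow> geq (GFn f ts) (GFn f us)"
| "geq t u \<Longrightarrow> geq (GAb a t) (GAb a u)"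
| "a \<noteq> b \<Longrightarrow> gfresh a u \<Longrightarrow> geq t (gswap a b u) \<Longrightarrow> geq (GAb a t) (GAb b u)"

text \<open>An interpretation maps variables to (representatives of) elements of
  NTm = Tm / geq; everything below respects geq.\<close>
type_synonym ('c, 'f, 'n) interp = "nat \<Rightarrow> ('c, 'f, 'n) gtm"

primrec ev :: "('c, 'f, 'n) interp \<Rightarrow> ('c, 'f, 'n) trm \<Rightarrow> ('c, 'f, 'n) gtm" where
  "ev \<theta> (Var x) = \<theta> x"
| "ev \<theta> (Bnd i) = undefined"
| "ev \<theta> (Nm a) = GNm a"
| "ev \<theta> (Con c) = GCon c"
| "ev \<theta> (Fn f ts) = GFn f (map (ev \<theta>) ts)"
| "ev \<theta> (Swap a b t) = (case (ev \<theta> a, ev \<theta> b) of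
       (GNm a', GNm b') \<Rightarrow> gswap a' b' (ev \<theta> t) | _ \<Rightarrow> ev \<theta> t)"
| "ev \<theta> (Ab a t) = (case ev \<theta> a of GNm a' \<Rightarrow> GAb a' (ev \<theta> t) | _ \<Rightarrow> ev \<theta> t)"

fun sat_eqfr :: "('c, 'f, 'n) interp \<Rightarrow> ('c, 'f, 'p, 'd, 'n) fm \<Rightarrow> bool" where
  "sat_eqfr \<theta> (Eq t u) = geq (ev \<theta> t) (ev \<theta> u)"
| "sat_eqfr \<theta> (Fr a t) = (case ev \<theta> a of GNm a' \<Rightarrow> gfresh a' (ev \<theta> t) | _ \<Rightarrow> False)"
| "sat_eqfr \<theta> _ = False"

definition interp_ok :: "('c, 'f, 'p, 'd, 'n) sig \<Rightarrow> ('d, 'n) ctx \<Rightarrow> ('c, 'f, 'n) interp \<Rightarrow> bool" where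
  "interp_ok S G \<theta> \<longleftrightarrow>
     (\<forall>x \<tau>. CVar x \<tau> \<in> set G \<longrightarrow> gty S (\<theta> x) \<tau>) \<and>
     (\<forall>a x. (a, Var x) \<in> ctx_fresh S G \<longrightarrow> gfresh a (\<theta> x))"

end

theory Submission
  imports Defs
begin


lemma nswap_simps[simp]: "nswap a b a = b" "nswap a b b = a" "c \<noteq> a \<Longrightarrow> c \<noteq> b \<Longrightarrow> nswap a b c = c"
  by (auto simp: nswap_def)
lemma nswap_invol[simp]: "nswap a b (nswap a b c) = c" by (auto simp: nswap_def)
lemma nswap_id[simp]: "nswap a a c = c" by (auto simp: nswap_def)
lemma nswap_sym: "nswap a b = nswap b a" by (auto simp: nswap_def fun_eq_iff)
lemma nswap_inj[simp]: "nswap a b c = nswap a b d \<longleftrightarrow> c = d" by (auto simp: nswap_def)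
lemma nswap_comm: "nswap p q (nswap a b c) = nswap (nswap p q a) (nswap p q b) (nswap p q c)"
  by (auto simp: nswap_def)
lemma fst_nswap: "fst a = fst b \<Longrightarrow> fst (nswap a b c) = fst c" by (auto simp: nswap_def)

lemma gswap_invol[simp]: "gswap a b (gswap a b x) = x"
  by (induction x) (auto intro: map_idI)
lemma gswap_id[simp]: "gswap a a x = x"
  by (induction x) (auto intro: map_idI)
lemma gswap_sym: "gswap a b x = gswap b a x"
  by (induction x) (auto simp: nswap_sym[of a b])
lemma gswap_comm: "gswap p q (gswap a b x) = gswap (nswap p q a) (nswap p q b) (gswap p q x)"
  by (induction x) (auto simp: nswap_def)
lemma size_list_cong': "(\<forall>t\<in>set ts. f t = g t) \<Longrightarrow> size_list f ts = size_list g ts"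
  by (induction ts) auto
lemma size_nsym[simp]: "size (c :: 'n nsym) = Suc 0" by (cases c) simp
lemma size_gswap[simp]: "size (gswap a b x) = size x"
proof (induction x)
  case (GFn f ts) thus ?case by (auto intro: size_list_cong')
qed auto

lemma gfresh_GNm[simp]: "gfresh a (GNm b) \<longleftrightarrow> a \<noteq> b"
  by (auto elim: gfresh.cases intro: gfresh.intros)
lemma gfresh_GCon[simp]: "gfresh a (GCon c)"
  by (auto intro: gfresh.intros)
lemma gfresh_GFn[simp]: "gfresh a (GFn f ts) \<longleftrightarrow> (\<forall>t\<in>set ts. gfresh a t)"
  by (auto elim: gfresh.cases intro: gfresh.intros)
lemma gfresh_GAb[simp]: "gfresh a (GAb b t) \<longleftrightarrow> a = b \<or> gfresh a t"
  by (auto elim: gfresh.cases intro: gfresh.intros)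

lemma gfresh_eqvt: "gfresh a x \<Longrightarrow> gfresh (nswap p q a) (gswap p q x)"
  by (induction x) auto
lemma gfresh_gswap_iff[simp]: "gfresh (nswap p q a) (gswap p q x) \<longleftrightarrow> gfresh a x"
  using gfresh_eqvt[of "nswap p q a" "gswap p q x" p q] gfresh_eqvt[of a x p q] by auto

lemma geq_refl: "geq x x"
proof (induction x)
  case (GFn f ts) thus ?case by (auto intro!: geq.intros simp: list_all2_conv_all_nth)
qed (auto intro: geq.intros)

lemma geq_GNm1[simp]: "geq (GNm a) y \<longleftrightarrow> y = GNm a"
  by (auto elim: geq.cases intro: geq.intros)
lemma geq_GNm2[simp]: "geq x (GNm a) \<longleftrightarrow> x = GNm a"
  by (auto elim: geq.cases intro: geq.intros)

lemma geq_eqvt: "geq x y \<Longrightarrow> geq (gswap p q x) (gswap p q y)"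
proof (induction rule: geq.induct)
  case (3 ts us f)
  thus ?case by (auto intro!: geq.intros simp: list_all2_map1 list_all2_map2 elim: list_all2_mono)
next
  case (5 a b u t)
  thus ?case by (auto intro!: geq.intros simp: gswap_comm[of p q a b u])
qed (auto intro: geq.intros)

lemma gfresh_geq: "geq x y \<Longrightarrow> gfresh c x \<Longrightarrow> gfresh c y"
proof (induction arbitrary: c rule: geq.induct)
  case (3 ts us f)
  show ?case unfolding gfresh_GFn
  proof
    fix u assume "u \<in> set us"
    then obtain i where i: "i < length us" "u = us ! i" by (auto simp: in_set_conv_nth)
    have l: "length ts = length us" using 3(1) by (simp add: list_all2_conv_all_nth)
    have "gfresh c (ts ! i)" using 3(2) i l by (simp add: nth_mem)
    moreover have "\<forall>c. gfresh c (ts ! i) \<longrightarrow> gfresh c (us ! i)"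
      using 3(1) i l by (auto simp: list_all2_conv_all_nth)
    ultimately show "gfresh c u" using i by blast
  qed
next
  case (5 a b u t)
  show ?case
  proof (cases "c = b")
    case False
    show ?thesis
    proof (cases "c = a")
      case True thus ?thesis using 5 False by auto
    next
      case ca: False
      with 5 False have "gfresh c (gswap a b u)" by auto
      hence "gfresh (nswap a b c) (gswap a b u)" using ca False by simp
      thus ?thesis using False by simp
    qed
  qed simp
qed auto

lemma geq_sym: "geq x y \<Longrightarrow> geq y x"
proof (induction rule: geq.induct)
  case (3 ts us f)
  thus ?case by (auto intro!: geq.intros simp: list_all2_conv_all_nth)
next
  case (5 a b u t)
  have 1: "geq u (gswap a b t)" using geq_eqvt[OF 5(4), of a b] by simp
  have "gfresh b (gswap a b u)" using 5(2) gfresh_gswap_iff[of a b a u] by simp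
  hence 2: "gfresh b t" using gfresh_geq[OF 5(4)] by simp
  show ?case using 5(1) 1 2 by (auto intro!: geq.intros simp: gswap_sym[of a b])
qed (auto intro: geq.intros)

lemma geq_F1: "gfresh a x \<Longrightarrow> gfresh b x \<Longrightarrow> geq (gswap a b x) x"
proof (induction x)
  case (GFn f ts) thus ?case by (auto intro!: geq.intros simp: list_all2_conv_all_nth)
next
  case (GAb c t)
  show ?case
  proof (cases "a = b")
    case True thus ?thesis by (simp add: geq_refl)
  next
    case ab: False
    show ?thesis
    proof (cases "c = a")
      case True
      thus ?thesis using GAb ab by (auto intro!: geq.intros simp: geq_refl gswap_sym[of a b])
    next
      case ca: False
      show ?thesis
      proof (cases "c = b")
        case True
        thus ?thesis using GAb ab ca by (auto intro!: geq.intros simp: geq_refl)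
      next
        case False
        thus ?thesis using GAb ab ca by (auto intro!: geq.intros)
      qed
    qed
  qed
qed (auto intro: geq.intros)

lemma geq_trans: "geq x y \<Longrightarrow> geq y z \<Longrightarrow> geq x z"
proof (induction x arbitrary: y z rule: measure_induct_rule[where f=size])
  case (less x)
  from less.prems(1) show ?case
  proof cases
    case 1 thus ?thesis using less.prems(2) by simp
  next
    case 2 thus ?thesis using less.prems(2) by simp
  next
    case (3 ts us f)
    from less.prems(2) 3 obtain vs where z: "z = GFn f vs" and uv: "list_all2 geq us vs"
      by (auto elim: geq.cases)
    have "list_all2 geq ts vs"
      using 3(3) uv unfolding list_all2_conv_all_nth
    proof (intro conjI allI impI)
      fix i assume A: "length ts = length us \<and> (\<forall>i<length ts. geq (ts ! i) (us ! i))"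
        and B: "length us = length vs \<and> (\<forall>i<length us. geq (us ! i) (vs ! i))" and i: "i < length ts"
      have "size (ts ! i) \<le> size_list size ts" by (rule size_list_estimation'[OF nth_mem[OF i] le_refl])
      hence "size (ts ! i) < size x" using 3(1) by simp
      thus "geq (ts ! i) (vs ! i)" using less.IH A B i by auto
    qed auto
    thus ?thesis using z 3 by (auto intro: geq.intros)
  next
    case (4 t u a)
    have IH: "\<And>y z. geq t y \<Longrightarrow> geq y z \<Longrightarrow> geq t z" using less.IH 4(1) by simp
    from less.prems(2) 4(2) show ?thesis
    proof cases
      case (4 u' w c)
      hence "geq u w" using \<open>y = GAb a u\<close> by simp
      hence "geq t w" using IH[OF \<open>geq t u\<close>] by simp
      thus ?thesis using 4 \<open>x = GAb a t\<close> \<open>y = GAb a u\<close> by (simp add: geq.intros(4))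
    next
      case (5 c d w u')
      hence "geq u (gswap a d w)" "a \<noteq> d" "gfresh a w" using \<open>y = GAb a u\<close> by simp_all
      hence "geq t (gswap a d w)" using IH[OF \<open>geq t u\<close>] by simp
      thus ?thesis using 5 \<open>x = GAb a t\<close> \<open>y = GAb a u\<close> \<open>a \<noteq> d\<close> \<open>gfresh a w\<close>
        by (simp add: geq.intros(5))
    qed simp_all
  next
    case (5 a b u t)
    have IH: "\<And>y z. geq t y \<Longrightarrow> geq y z \<Longrightarrow> geq t z" using less.IH 5(1) by simp
    note h0 = 5
    from less.prems(2) 5(2) show ?thesis
    proof cases
      case (4 u' v c)
      hence uv: "geq u v" and z: "z = GAb b v" using h0 by simp_all
      have "geq (gswap a b u) (gswap a b v)" using geq_eqvt[OF uv] .
      hence "geq t (gswap a b v)" using IH h0 by blast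
      moreover have "gfresh a v" using gfresh_geq uv h0 by blast
      ultimately show ?thesis using z h0 by (simp add: geq.intros(5))
    next
      case (5 b' c v u')
      hence h: "b \<noteq> c" "gfresh b v" "geq u (gswap b c v)" "z = GAb c v" using h0 by simp_all
      show ?thesis
      proof (cases "a = c")
        case True
        have "geq (gswap a b u) (gswap a b (gswap b c v))" using geq_eqvt[OF h(3)] .
        hence "geq (gswap a b u) v" using True by (simp add: gswap_sym[of b c])
        hence "geq t v" using IH h0 by blast
        thus ?thesis using h h0 True by (simp add: geq.intros(4))
      next
        case ac: False
        have "gfresh a (gswap b c v)" using gfresh_geq h h0 by blast
        hence fav: "gfresh a v" using h h0 ac
          using gfresh_gswap_iff[of b c a v] by simp
        have e1: "geq (gswap a b u) (gswap a b (gswap b c v))" using geq_eqvt[OF h(3)] .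
        have "gswap a b (gswap b c v) = gswap a c (gswap a b v)"
          using ac h h0 by (simp add: gswap_comm[of a b b c v])
        hence e2: "geq (gswap a b u) (gswap a c (gswap a b v))" using e1 by simp
        have e3: "geq (gswap a c (gswap a b v)) (gswap a c v)"
          using geq_eqvt[OF geq_F1[OF fav \<open>gfresh b v\<close>]] .
        have "geq t (gswap a c (gswap a b v))" using IH[OF _ e2] h0 by blast
        hence "geq t (gswap a c v)" using IH[OF _ e3] by blast
        thus ?thesis using h h0 ac fav by (simp add: geq.intros(5))
      qed
    qed simp_all
  qed
qed



inductive_simps has_ty_Var[simp]: "has_ty S G (Var x) \<tau>"
inductive_simps has_ty_Bnd[simp]: "has_ty S G (Bnd i) \<tau>"
inductive_simps has_ty_Nm[simp]: "has_ty S G (Nm a) \<tau>"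
inductive_simps has_ty_Con[simp]: "has_ty S G (Con c) \<tau>"
inductive_simps has_ty_Fn[simp]: "has_ty S G (Fn f ts) \<tau>"
inductive_simps has_ty_Swap[simp]: "has_ty S G (Swap a b t) \<tau>"
inductive_simps has_ty_Ab[simp]: "has_ty S G (Ab a t) \<tau>"

lemma ty_weaken: "has_ty S G t \<tau> \<Longrightarrow> set G \<subseteq> set G' \<Longrightarrow> has_ty S G' t \<tau>"
proof (induction t arbitrary: \<tau>)
  case (Fn f ts) thus ?case by (auto simp: list_all2_conv_all_nth)
qed auto

lemma ctx_ok_var: "ctx_ok G \<Longrightarrow> CVar x \<tau> \<in> set G \<Longrightarrow> CVar x \<tau>' \<in> set G \<Longrightarrow> \<tau> = \<tau>'"
  unfolding ctx_ok_def using inj_onD[of csym "set G" "CVar x \<tau>" "CVar x \<tau>'"]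
  by (auto simp: distinct_map)

lemma ty_unique: "ctx_ok G \<Longrightarrow> has_ty S G t \<tau> \<Longrightarrow> has_ty S G t \<tau>' \<Longrightarrow> \<tau> = \<tau>'"
proof (induction t arbitrary: \<tau> \<tau>')
  case (Var x)
  hence "CVar x \<tau> \<in> set G" "CVar x \<tau>' \<in> set G" by simp_all
  thus ?case using ctx_ok_var Var(1) by blast
next
  case (Bnd i) thus ?case by simp
next
  case (Nm a) thus ?case by simp
next
  case (Con c) thus ?case by simp
next
  case (Fn f ts) thus ?case by simp
next
  case (Swap a b t)
  have "has_ty S G t \<tau>" "has_ty S G t \<tau>'" using Swap.prems by auto
  thus ?case using Swap.IH(3) Swap.prems(1) by blast
next
  case (Ab a t)
  from Ab.prems(2) obtain \<nu> \<sigma> where 1: "\<tau> = AbsT \<nu> \<sigma>" "has_ty S G a (NameT \<nu>)" "has_ty S G t \<sigma>"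
    by (auto simp del: has_ty_Swap)
  from Ab.prems(3) obtain \<nu>' \<sigma>' where 2: "\<tau>' = AbsT \<nu>' \<sigma>'" "has_ty S G a (NameT \<nu>')" "has_ty S G t \<sigma>'"
    by auto
  have "\<nu> = \<nu>'" using Ab.IH(1)[OF Ab.prems(1) 1(2) 2(2)] by simp
  moreover have "\<sigma> = \<sigma>'" using Ab.IH(2)[OF Ab.prems(1) 1(3) 2(3)] .
  ultimately show ?case using 1 2 by simp
qed

lemma ty_subst: "has_ty S G (topen k t s) \<sigma> \<Longrightarrow> has_ty S G t \<tau> \<Longrightarrow> has_ty S G u \<tau> \<Longrightarrow> ctx_ok G
  \<Longrightarrow> has_ty S G (topen k u s) \<sigma>"
proof (induction s arbitrary: \<sigma>)
  case (Bnd i)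
  show ?case
  proof (cases "i = k")
    case True
    hence "has_ty S G t \<sigma>" using Bnd.prems(1) by simp
    hence "\<sigma> = \<tau>" using ty_unique Bnd.prems by blast
    thus ?thesis using True Bnd.prems(3) by simp
  next
    case False thus ?thesis using Bnd.prems(1) by simp
  qed
next
  case (Fn f ts)
  from Fn.prems(1) have l: "list_all2 (has_ty S G) (map (topen k t) ts) (fst (fty S f))"
    and s: "\<sigma> = Data (snd (fty S f))" by simp_all
  have "list_all2 (has_ty S G) (map (topen k u) ts) (fst (fty S f))"
    unfolding list_all2_conv_all_nth
  proof (intro conjI allI impI)
    show "length (map (topen k u) ts) = length (fst (fty S f))" using l by (simp add: list_all2_conv_all_nth)
    fix i assume i: "i < length (map (topen k u) ts)"
    have "has_ty S G (topen k t (ts ! i)) (fst (fty S f) ! i)" using l i by (simp add: list_all2_conv_all_nth)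
    hence "has_ty S G (topen k u (ts ! i)) (fst (fty S f) ! i)"
      using Fn.IH[OF nth_mem _ Fn.prems(2,3,4)] i by simp
    thus "has_ty S G (map (topen k u) ts ! i) (fst (fty S f) ! i)" using i by simp
  qed
  thus ?case using s by simp
next
  case (Swap a b s)
  from Swap.prems(1) obtain \<nu> where h: "has_ty S G (topen k t a) (NameT \<nu>)" "has_ty S G (topen k t b) (NameT \<nu>)"
    "has_ty S G (topen k t s) \<sigma>" by auto
  show ?case using Swap.IH(1)[OF h(1) Swap.prems(2-4)] Swap.IH(2)[OF h(2) Swap.prems(2-4)]
    Swap.IH(3)[OF h(3) Swap.prems(2-4)] by auto
next
  case (Ab a s)
  from Ab.prems(1) obtain \<nu> \<sigma>' where h: "\<sigma> = AbsT \<nu> \<sigma>'" "has_ty S G (topen k t a) (NameT \<nu>)"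
    "has_ty S G (topen k t s) \<sigma>'" by auto
  show ?case using Ab.IH(1)[OF h(2) Ab.prems(2-4)] Ab.IH(2)[OF h(3) Ab.prems(2-4)] h(1) by auto
qed simp_all

lemma gty_NameT: "gty S g (NameT \<nu>) \<Longrightarrow> \<exists>p. g = GNm p \<and> fst p = \<nu>"
  by (cases rule: gty.cases) auto
lemma gty_AbsT: "gty S g (AbsT \<nu> \<sigma>) \<Longrightarrow> \<exists>p h. g = GAb p h \<and> fst p = \<nu> \<and> gty S h \<sigma>"
  by (cases rule: gty.cases) auto

lemma gty_gswap: "gty S g \<tau> \<Longrightarrow> fst p = fst q \<Longrightarrow> gty S (gswap p q g) \<tau>"
proof (induction rule: gty.induct)
  case (1 a)
  have "gty S (GNm (nswap p q a)) (NameT (fst (nswap p q a)))" by (rule gty.intros)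
  thus ?case using 1 by (simp add: fst_nswap)
next
  case (2 c) thus ?case by (auto intro: gty.intros)
next
  case (3 gs f)
  thus ?case by (auto intro!: gty.intros simp: list_all2_map1 elim: list_all2_mono)
next
  case (4 g \<tau> a)
  have "gty S (GAb (nswap p q a) (gswap p q g)) (AbsT (fst (nswap p q a)) \<tau>)" using 4 by (auto intro: gty.intros)
  thus ?case using 4 by (simp add: fst_nswap)
qed

lemma ev_gty: "has_ty S G t \<tau> \<Longrightarrow> interp_ok S G \<theta> \<Longrightarrow> gty S (ev \<theta> t) \<tau>"
proof (induction rule: has_ty.induct)
  case (ty_var x \<tau> G) thus ?case by (auto simp: interp_ok_def)
next
  case (ty_nm a G) thus ?case by (auto intro: gty.intros)
next
  case (ty_con G c) thus ?case by (auto intro: gty.intros)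
next
  case (ty_fn G ts f)
  thus ?case by (auto intro!: gty.intros simp: list_all2_map1 elim: list_all2_mono)
next
  case (ty_swap G a \<nu> b t \<tau>)
  then obtain p q where "ev \<theta> a = GNm p" "ev \<theta> b = GNm q" "fst p = \<nu>" "fst q = \<nu>"
    using gty_NameT by metis
  thus ?case using ty_swap gty_gswap[of S "ev \<theta> t" \<tau> p q] by auto
next
  case (ty_abs G a \<nu> t \<tau>)
  then obtain p where "ev \<theta> a = GNm p" "fst p = \<nu>" using gty_NameT by metis
  thus ?case using ty_abs by (auto intro: gty.intros)
qed

lemma ev_name: "has_ty S G a (NameT \<nu>) \<Longrightarrow> interp_ok S G \<theta> \<Longrightarrow> \<exists>p. ev \<theta> a = GNm p \<and> fst p = \<nu>"
  using ev_gty gty_NameT by metis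

fun swapc :: "('c, 'f, 'n) gtm \<Rightarrow> ('c, 'f, 'n) gtm \<Rightarrow> ('c, 'f, 'n) gtm \<Rightarrow> ('c, 'f, 'n) gtm" where
  "swapc (GNm p) (GNm q) T = gswap p q T"
| "swapc _ _ T = T"

fun abc :: "('c, 'f, 'n) gtm \<Rightarrow> ('c, 'f, 'n) gtm \<Rightarrow> ('c, 'f, 'n) gtm" where
  "abc (GNm p) T = GAb p T"
| "abc _ T = T"

lemma ev_Swap'[simp]: "ev \<theta> (Swap a b t) = swapc (ev \<theta> a) (ev \<theta> b) (ev \<theta> t)"
  by (cases "ev \<theta> a"; cases "ev \<theta> b") auto
lemma ev_Ab'[simp]: "ev \<theta> (Ab a t) = abc (ev \<theta> a) (ev \<theta> t)"
  by (cases "ev \<theta> a") auto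
declare ev.simps(6,7)[simp del]

lemma swapc_nonm: "(\<forall>p. A \<noteq> GNm p) \<or> (\<forall>p. B \<noteq> GNm p) \<Longrightarrow> swapc A B T = T"
  by (cases A; cases B) auto
lemma abc_nonm: "(\<forall>p. A \<noteq> GNm p) \<Longrightarrow> abc A T = T"
  by (cases A) auto

lemma swapc_cong: "geq A A' \<Longrightarrow> geq B B' \<Longrightarrow> geq T T' \<Longrightarrow> geq (swapc A B T) (swapc A' B' T')"
proof (cases "(\<exists>p. A = GNm p) \<and> (\<exists>q. B = GNm q)")
  case True
  assume h: "geq A A'" "geq B B'" "geq T T'"
  then obtain p q where "A = GNm p" "A' = GNm p" "B = GNm q" "B' = GNm q" using True by auto
  thus ?thesis using h geq_eqvt[of T T' p q] by simp
next
  case False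
  assume h: "geq A A'" "geq B B'" "geq T T'"
  have "(\<forall>p. A' \<noteq> GNm p) \<or> (\<forall>p. B' \<noteq> GNm p)" using False h by auto
  moreover have "(\<forall>p. A \<noteq> GNm p) \<or> (\<forall>p. B \<noteq> GNm p)" using False by auto
  ultimately show ?thesis using h swapc_nonm by metis
qed

lemma abc_cong: "geq A A' \<Longrightarrow> geq T T' \<Longrightarrow> geq (abc A T) (abc A' T')"
proof (cases "\<exists>p. A = GNm p")
  case True
  assume h: "geq A A'" "geq T T'"
  then obtain p where "A = GNm p" "A' = GNm p" using True by auto
  thus ?thesis using h by (simp add: geq.intros(4))
next
  case False
  assume h: "geq A A'" "geq T T'"
  hence "\<forall>q. A' \<noteq> GNm q" using False by auto
  thus ?thesis using False h abc_nonm by metis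
qed

lemma swapc_eqvt: "swapc (gswap a c A) (gswap a c B) (gswap a c T) = gswap a c (swapc A B T)"
  by (cases A; cases B) (auto simp: gswap_comm[of a c])
lemma abc_eqvt: "abc (gswap a c A) (gswap a c T) = gswap a c (abc A T)"
  by (cases A) auto

lemma swapc_fresh: "gfresh a A \<Longrightarrow> gfresh a B \<Longrightarrow> gfresh a T \<Longrightarrow> gfresh a (swapc A B T)"
proof (cases "(\<exists>p. A = GNm p) \<and> (\<exists>q. B = GNm q)")
  case True
  assume h: "gfresh a A" "gfresh a B" "gfresh a T"
  then obtain p q where pq: "A = GNm p" "B = GNm q" using True by auto
  hence "a \<noteq> p" "a \<noteq> q" using h by auto
  hence "gfresh (nswap p q a) (gswap p q T)" using h gfresh_gswap_iff[of p q a T] by simp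
  thus ?thesis using pq \<open>a \<noteq> p\<close> \<open>a \<noteq> q\<close> by simp
next
  case False
  hence "(\<forall>p. A \<noteq> GNm p) \<or> (\<forall>p. B \<noteq> GNm p)" by auto
  thus "gfresh a A \<Longrightarrow> gfresh a B \<Longrightarrow> gfresh a T \<Longrightarrow> ?thesis" using swapc_nonm by metis
qed

lemma abc_fresh: "gfresh a A \<Longrightarrow> gfresh a T \<Longrightarrow> gfresh a (abc A T)"
  by (cases A) auto

lemma ev_cong: "geq (ev \<theta> t) (ev \<theta> u) \<Longrightarrow> geq (ev \<theta> (topen k t s)) (ev \<theta> (topen k u s))"
proof (induction s)
  case (Fn f ts)
  thus ?case by (auto intro!: geq.intros simp: list_all2_conv_all_nth)
next
  case (Swap a b s) thus ?case by (simp add: swapc_cong)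
next
  case (Ab a s) thus ?case by (simp add: abc_cong)
qed (auto simp: geq_refl)

lemma sat_cong: "is_atom P \<Longrightarrow> is_eqfr (inst P t) \<Longrightarrow> sat_eqfr \<theta> (Eq t u) \<Longrightarrow> sat_eqfr \<theta> (inst P t)
  \<Longrightarrow> sat_eqfr \<theta> (inst P u)"
proof (cases P)
  case (Eq s1 s2)
  assume h: "sat_eqfr \<theta> (Eq t u)" "sat_eqfr \<theta> (inst P t)"
  have e: "geq (ev \<theta> t) (ev \<theta> u)" using h by simp
  have "geq (ev \<theta> (topen 0 u s1)) (ev \<theta> (topen 0 t s1))" using geq_sym[OF ev_cong[OF e]] .
  moreover have "geq (ev \<theta> (topen 0 t s1)) (ev \<theta> (topen 0 t s2))" using h Eq by simp
  moreover have "geq (ev \<theta> (topen 0 t s2)) (ev \<theta> (topen 0 u s2))" using ev_cong[OF e] .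
  ultimately have "geq (ev \<theta> (topen 0 u s1)) (ev \<theta> (topen 0 u s2))" using geq_trans by metis
  thus ?thesis using Eq by simp
next
  case (Fr p s)
  assume h: "sat_eqfr \<theta> (Eq t u)" "sat_eqfr \<theta> (inst P t)"
  have e: "geq (ev \<theta> t) (ev \<theta> u)" using h by simp
  from h Fr obtain a' where a': "ev \<theta> (topen 0 t p) = GNm a'" "gfresh a' (ev \<theta> (topen 0 t s))"
    by (auto split: gtm.splits)
  have "ev \<theta> (topen 0 u p) = GNm a'" using ev_cong[OF e, of 0 p] a' by simp
  moreover have "gfresh a' (ev \<theta> (topen 0 u s))" using gfresh_geq[OF ev_cong[OF e] a'(2)] .
  ultimately show ?thesis using Fr by simp
qed auto

lemma ev_local: "has_ty S G s \<tau> \<Longrightarrow> (\<forall>x \<tau>. CVar x \<tau> \<in> set G \<longrightarrow> \<theta> x = \<theta>' x) \<Longrightarrow> ev \<theta> s = ev \<theta>' s"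
proof (induction rule: has_ty.induct)
  case (ty_fn G ts f)
  thus ?case by (auto simp: list_all2_conv_all_nth intro!: map_cong) (metis in_set_conv_nth)
qed auto

lemma ev_eqvt: "has_ty S G s \<tau> \<Longrightarrow> (\<forall>b. CNm b \<in> set G \<longrightarrow> b \<noteq> a \<and> b \<noteq> c)
   \<Longrightarrow> ev (\<lambda>x. gswap a c (\<theta> x)) s = gswap a c (ev \<theta> s)"
proof (induction rule: has_ty.induct)
  case (ty_fn G ts f)
  thus ?case by (auto simp: list_all2_conv_all_nth intro!: map_cong) (metis in_set_conv_nth)
next
  case (ty_swap G a1 \<nu> b1 t \<tau>)
  thus ?case by (simp add: swapc_eqvt)
next
  case (ty_abs G a1 \<nu> t \<tau>)
  thus ?case by (simp add: abc_eqvt)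
qed auto

lemma ev_fresh: "has_ty S G1 t \<tau> \<Longrightarrow> (\<forall>x \<tau>. CVar x \<tau> \<in> set G1 \<longrightarrow> gfresh a (\<theta> x))
  \<Longrightarrow> (\<forall>b. CNm b \<in> set G1 \<longrightarrow> b \<noteq> a) \<Longrightarrow> gfresh a (ev \<theta> t)"
proof (induction rule: has_ty.induct)
  case (ty_fn G ts f)
  thus ?case by (auto simp: list_all2_conv_all_nth in_set_conv_nth)
next
  case (ty_swap G a1 \<nu> b1 t \<tau>)
  thus ?case by (simp add: swapc_fresh)
next
  case (ty_abs G a1 \<nu> t \<tau>)
  thus ?case by (simp add: abc_fresh)
qed auto

primrec gnames :: "('c, 'f, 'n) gtm \<Rightarrow> 'n nsym set" where
  "gnames (GNm a) = {a}"
| "gnames (GCon c) = {}"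
| "gnames (GFn f ts) = \<Union>(set (map gnames ts))"
| "gnames (GAb a t) = insert a (gnames t)"

lemma finite_gnames: "finite (gnames g)"
  by (induction g) auto

lemma gfresh_notin: "c \<notin> gnames g \<Longrightarrow> gfresh c g"
  by (induction g) auto



lemma interp_okD: "interp_ok S G \<theta> \<Longrightarrow> (a, Var x) \<in> ctx_fresh S G \<Longrightarrow> gfresh a (\<theta> x)"
  "interp_ok S G \<theta> \<Longrightarrow> CVar x \<tau> \<in> set G \<Longrightarrow> gty S (\<theta> x) \<tau>"
  unfolding interp_ok_def by blast+

lemma ctx_fresh_elim: "(b, s) \<in> ctx_fresh S G \<Longrightarrow> \<exists>G1 G2 \<tau>. G = G1 @ [CNm b] @ G2 \<and> has_ty S G1 s \<tau>"
  by (erule ctx_fresh.cases) auto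

lemma ctx_fresh_snoc: "(b, s) \<in> ctx_fresh S (G @ [e]) \<Longrightarrow>
  (b, s) \<in> ctx_fresh S G \<or> (e = CNm b \<and> (\<exists>\<tau>. has_ty S G s \<tau>))"
proof -
  assume "(b, s) \<in> ctx_fresh S (G @ [e])"
  then obtain G1 G2 \<tau> where h: "G @ [e] = G1 @ [CNm b] @ G2" "has_ty S G1 s \<tau>"
    using ctx_fresh_elim by blast
  show ?thesis
  proof (cases G2 rule: rev_cases)
    case Nil thus ?thesis using h by auto
  next
    case (snoc G2' y)
    hence "G = G1 @ [CNm b] @ G2'" using h by auto
    thus ?thesis using h by (auto intro: ctx_fresh.intros)
  qed
qed

lemma ctx_fresh_fresh: "(a, t) \<in> ctx_fresh S G \<Longrightarrow> ctx_ok G \<Longrightarrow> interp_ok S G \<theta> \<Longrightarrow> gfresh a (ev \<theta> t)"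
proof -
  assume "(a, t) \<in> ctx_fresh S G" and ok: "ctx_ok G" and io: "interp_ok S G \<theta>"
  then obtain G1 G2 \<tau> where h: "G = G1 @ [CNm a] @ G2" "has_ty S G1 t \<tau>"
    using ctx_fresh_elim by blast
  have 1: "\<forall>x \<tau>. CVar x \<tau> \<in> set G1 \<longrightarrow> gfresh a (\<theta> x)"
  proof (intro allI impI)
    fix x \<tau> assume "CVar x \<tau> \<in> set G1"
    hence "(a, Var x) \<in> ctx_fresh S G" using h by (auto intro: ctx_fresh.intros)
    thus "gfresh a (\<theta> x)" using io interp_okD(1) by blast
  qed
  have 2: "\<forall>b. CNm b \<in> set G1 \<longrightarrow> b \<noteq> a"
  proof (intro allI impI)
    fix b assume "CNm b \<in> set G1"
    hence "Inr b \<in> csym ` set G1" by force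
    moreover have "Inr a \<notin> csym ` set G1" using ok h unfolding ctx_ok_def by auto
    ultimately show "b \<noteq> a" by auto
  qed
  show ?thesis using ev_fresh[OF h(2) 1 2] .
qed

lemma gAb_inv: "geq (GAb p T) (GAb q U) \<Longrightarrow> (p = q \<and> geq T U) \<or> (p \<noteq> q \<and> gfresh p U \<and> geq T (gswap p q U))"
  by (auto elim: geq.cases)

lemma ax_sound: "ax_inst S G Ps Qs \<Longrightarrow> interp_ok S G \<theta> \<Longrightarrow>
  (\<forall>P\<in>set Ps. is_eqfr P \<and> wf_atom S G P \<and> sat_eqfr \<theta> P) \<Longrightarrow>
  \<exists>Q\<in>set Qs. is_eqfr Q \<and> wf_atom S G Q \<and> sat_eqfr \<theta> Q"
proof (induction rule: ax_inst.induct)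
  case (S1 a \<nu> t \<tau>)
  then obtain p where "ev \<theta> a = GNm p" using ev_name by metis
  thus ?case using S1 by (auto simp: geq_refl)
next
  case (S2 a \<nu> b t \<tau>)
  then obtain p q where "ev \<theta> a = GNm p" "ev \<theta> b = GNm q" using ev_name by metis
  thus ?case using S2 by (auto simp: geq_refl)
next
  case (S3 a \<nu> b)
  then obtain p q where "ev \<theta> a = GNm p" "ev \<theta> b = GNm q" using ev_name by metis
  thus ?case using S3 by (auto simp: geq_refl)
next
  case (E1 a \<nu> b c)
  then obtain p q where "ev \<theta> a = GNm p" "ev \<theta> b = GNm q" using ev_name by metis
  thus ?case using E1 by (auto simp: geq_refl)
next
  case (E2_fn a \<nu> b f ts \<tau>)
  then obtain p q where pq: "ev \<theta> a = GNm p" "ev \<theta> b = GNm q" using ev_name by metis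
  have "wf_atom S G (Eq (Swap a b (Fn f ts)) (Fn f (map (Swap a b) ts)))"
    using E2_fn by (auto simp: list_all2_map1 elim: list_all2_mono)
  thus ?case using pq by (auto simp: geq_refl comp_def)
next
  case (E2_swap a \<nu> b c d t \<tau>)
  then obtain p q where pq: "ev \<theta> a = GNm p" "ev \<theta> b = GNm q" using ev_name by metis
  from E2_swap obtain \<nu>' where cd: "has_ty S G c (NameT \<nu>')" "has_ty S G d (NameT \<nu>')" "has_ty S G t \<tau>"
    by auto
  then obtain r s where rs: "ev \<theta> c = GNm r" "ev \<theta> d = GNm s" using ev_name E2_swap by metis
  have "wf_atom S G (Eq (Swap a b (Swap c d t)) (Swap (Swap a b c) (Swap a b d) (Swap a b t)))"
    using E2_swap cd by auto
  thus ?case using pq rs by (auto simp: geq_refl gswap_comm[of p q r s])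
next
  case (E2_abs a \<nu> b c t \<tau>)
  then obtain p q where pq: "ev \<theta> a = GNm p" "ev \<theta> b = GNm q" using ev_name by metis
  from E2_abs obtain \<nu>' \<sigma> where cd: "has_ty S G c (NameT \<nu>')" "has_ty S G t \<sigma>" "\<tau> = AbsT \<nu>' \<sigma>"
    by auto
  then obtain r where rs: "ev \<theta> c = GNm r" using ev_name E2_abs by metis
  have "wf_atom S G (Eq (Swap a b (Ab c t)) (Ab (Swap a b c) (Swap a b t)))"
    using E2_abs cd by auto
  thus ?case using pq rs by (auto simp: geq_refl)
next
  case (E3_rel a \<nu> b p ts) thus ?case by simp
next
  case (E3_eq a \<nu> b t u)
  then obtain p q where pq: "ev \<theta> a = GNm p" "ev \<theta> b = GNm q" using ev_name by metis
  thus ?case using E3_eq by (auto simp: geq_eqvt)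
next
  case (E3_fr a \<nu> b c t)
  then obtain p q where pq: "ev \<theta> a = GNm p" "ev \<theta> b = GNm q" using ev_name by metis
  from E3_fr obtain \<nu>' \<tau> where "has_ty S G c (NameT \<nu>')" "has_ty S G t \<tau>" by auto
  moreover then obtain r where "ev \<theta> c = GNm r" using ev_name E3_fr by metis
  ultimately show ?case using E3_fr pq by auto
next
  case (F1 a \<nu> b t \<tau>)
  then obtain p q where pq: "ev \<theta> a = GNm p" "ev \<theta> b = GNm q" using ev_name by metis
  thus ?case using F1 by (auto simp: geq_F1)
next
  case (F2 a \<nu> b \<nu>')
  then obtain p q where pq: "ev \<theta> a = GNm p" "ev \<theta> b = GNm q" "fst p = \<nu>" "fst q = \<nu>'"
    using ev_name by metis
  thus ?case using F2 by auto
next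
  case (F3 a \<nu>)
  then obtain p where pq: "ev \<theta> a = GNm p" using ev_name by metis
  thus ?case using F3 by auto
next
  case (F4 a \<nu> b)
  then obtain p q where pq: "ev \<theta> a = GNm p" "ev \<theta> b = GNm q" using ev_name by metis
  thus ?case using F4 by auto
next
  case (A1 a \<nu> b t \<tau> u)
  then obtain p q where pq: "ev \<theta> a = GNm p" "ev \<theta> b = GNm q" using ev_name by metis
  have "geq (GAb p (ev \<theta> t)) (GAb q (ev \<theta> u))"
  proof (cases "p = q")
    case True thus ?thesis using A1 pq by (auto intro: geq.intros)
  next
    case False thus ?thesis using A1 pq by (auto intro: geq.intros)
  qed
  moreover have "wf_atom S G (Eq (Ab a t) (Ab b u))" using A1 by auto
  ultimately show ?case using pq by auto
qed


lemma ctx_fresh_ty: "(a, t) \<in> ctx_fresh S G \<Longrightarrow> CNm a \<in> set G \<and> (\<exists>\<tau>. has_ty S G t \<tau>)"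
proof -
  assume "(a, t) \<in> ctx_fresh S G"
  then obtain G1 G2 \<tau> where h: "G = G1 @ [CNm a] @ G2" "has_ty S G1 t \<tau>"
    using ctx_fresh_elim by blast
  have "has_ty S G t \<tau>" using ty_weaken[OF h(2), of G] h(1) by auto
  thus ?thesis using h(1) by auto
qed

lemma ctx_fresh_var: "(b, Var y) \<in> ctx_fresh S G \<Longrightarrow> \<exists>\<tau>. CVar y \<tau> \<in> set G"
  using ctx_fresh_ty[of b "Var y" S G] by auto

lemma wf_weaken: "wf_atom S G A \<Longrightarrow> set G \<subseteq> set G' \<Longrightarrow> wf_atom S G' A"
  by (cases A) (auto intro: ty_weaken elim: list_all2_mono)

lemma eqfr_inst: "is_eqfr (fopen k t P) \<Longrightarrow> is_eqfr (fopen k u P)"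
  by (cases P) auto

lemma wf_inst: "ctx_ok G \<Longrightarrow> wf_atom S G (Eq t u) \<Longrightarrow> is_eqfr (inst P t) \<Longrightarrow> wf_atom S G (inst P t)
  \<Longrightarrow> wf_atom S G (inst P u)"
proof (cases P)
  case (Eq s1 s2)
  assume h: "ctx_ok G" "wf_atom S G (Eq t u)" "wf_atom S G (inst P t)"
  from h obtain \<tau> where tu: "has_ty S G t \<tau>" "has_ty S G u \<tau>" by auto
  from h Eq obtain \<sigma> where "has_ty S G (topen 0 t s1) \<sigma>" "has_ty S G (topen 0 t s2) \<sigma>" by auto
  hence "has_ty S G (topen 0 u s1) \<sigma>" "has_ty S G (topen 0 u s2) \<sigma>"
    using ty_subst[OF _ tu h(1)] by blast+
  thus ?thesis using Eq by auto
next
  case (Fr s1 s2)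
  assume h: "ctx_ok G" "wf_atom S G (Eq t u)" "wf_atom S G (inst P t)"
  from h obtain \<tau> where tu: "has_ty S G t \<tau>" "has_ty S G u \<tau>" by auto
  from h Fr obtain \<nu> \<sigma> where "has_ty S G (topen 0 t s1) (NameT \<nu>)" "has_ty S G (topen 0 t s2) \<sigma>" by auto
  hence "has_ty S G (topen 0 u s1) (NameT \<nu>)" "has_ty S G (topen 0 u s2) \<sigma>"
    using ty_subst[OF _ tu h(1)] by blast+
  thus ?thesis using Fr by auto
qed auto

lemma sat_local: "wf_atom S G A \<Longrightarrow> (\<forall>y \<tau>. CVar y \<tau> \<in> set G \<longrightarrow> \<theta> y = \<theta>' y)
  \<Longrightarrow> sat_eqfr \<theta>' A = sat_eqfr \<theta> A"
proof (cases A)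
  case (Eq t u)
  assume h: "wf_atom S G A" "\<forall>y \<tau>. CVar y \<tau> \<in> set G \<longrightarrow> \<theta> y = \<theta>' y"
  then obtain \<tau> where "has_ty S G t \<tau>" "has_ty S G u \<tau>" using Eq by auto
  hence "ev \<theta> t = ev \<theta>' t" "ev \<theta> u = ev \<theta>' u" using ev_local[OF _ h(2)] by blast+
  thus ?thesis using Eq by simp
next
  case (Fr t u)
  assume h: "wf_atom S G A" "\<forall>y \<tau>. CVar y \<tau> \<in> set G \<longrightarrow> \<theta> y = \<theta>' y"
  then obtain \<tau> \<nu> where "has_ty S G t \<nu>" "has_ty S G u \<tau>" using Fr by auto
  hence "ev \<theta> t = ev \<theta>' t" "ev \<theta> u = ev \<theta>' u" using ev_local[OF _ h(2)] by blast+
  thus ?thesis using Fr by (simp split: gtm.split)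
qed auto

lemma sat_eqvt: "wf_atom S G A \<Longrightarrow> (\<forall>b. CNm b \<in> set G \<longrightarrow> b \<noteq> a \<and> b \<noteq> c) \<Longrightarrow> sat_eqfr \<theta> A
  \<Longrightarrow> sat_eqfr (\<lambda>x. gswap a c (\<theta> x)) A"
proof (cases A)
  case (Eq t u)
  assume h: "wf_atom S G A" "\<forall>b. CNm b \<in> set G \<longrightarrow> b \<noteq> a \<and> b \<noteq> c" "sat_eqfr \<theta> A"
  then obtain \<tau> where "has_ty S G t \<tau>" "has_ty S G u \<tau>" using Eq by auto
  hence "ev (\<lambda>x. gswap a c (\<theta> x)) t = gswap a c (ev \<theta> t)" "ev (\<lambda>x. gswap a c (\<theta> x)) u = gswap a c (ev \<theta> u)"
    using ev_eqvt h(2) by blast+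
  thus ?thesis using Eq h(3) geq_eqvt by simp
next
  case (Fr t u)
  assume h: "wf_atom S G A" "\<forall>b. CNm b \<in> set G \<longrightarrow> b \<noteq> a \<and> b \<noteq> c" "sat_eqfr \<theta> A"
  then obtain \<tau> \<nu> where "has_ty S G t \<nu>" "has_ty S G u \<tau>" using Fr by auto
  hence e: "ev (\<lambda>x. gswap a c (\<theta> x)) t = gswap a c (ev \<theta> t)" "ev (\<lambda>x. gswap a c (\<theta> x)) u = gswap a c (ev \<theta> u)"
    using ev_eqvt h(2) by blast+
  from h(3) Fr obtain p where p: "ev \<theta> t = GNm p" "gfresh p (ev \<theta> u)" by (auto split: gtm.splits)
  have "gfresh (nswap a c p) (gswap a c (ev \<theta> u))" using gfresh_eqvt[OF p(2)] .
  thus ?thesis using Fr e p by simp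
qed auto

primrec enames :: "('c, 'f, 'n) interp \<Rightarrow> ('d, 'n) centry \<Rightarrow> 'n nsym set" where
  "enames \<theta> (CVar y \<tau>) = gnames (\<theta> y)"
| "enames \<theta> (CNm b) = {b}"

lemma fresh_name: "finite (N :: 'n nsym set) \<Longrightarrow> \<exists>c. fst c = \<nu> \<and> c \<notin> N"
proof -
  assume "finite N"
  hence "finite (snd ` N)" by simp
  then obtain k where "k \<notin> snd ` N" using ex_new_if_finite[OF infinite_UNIV_nat] by blast
  hence "(\<nu>, k) \<notin> N" by force
  thus ?thesis by auto
qed

lemma sound: "deriv S G \<Gamma> \<Delta> \<Longrightarrow> ctx_ok G \<Longrightarrow> \<Delta> = {#Bot#} \<Longrightarrow> \<forall>A\<in>#\<Gamma>. is_eqfr A \<and> wf_atom S G A \<Longrightarrow>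
   interp_ok S G \<theta> \<Longrightarrow> \<forall>A\<in>#\<Gamma>. sat_eqfr \<theta> A \<Longrightarrow> False"
proof (induction arbitrary: \<theta> rule: deriv.induct)
  case init from init.prems init.hyps show ?case by simp
next
  case topR from topR.prems show ?case by simp
next
  case botL from botL.prems show ?case by simp
next
  case andL from andL.prems show ?case by simp
next
  case andR from andR.prems show ?case by simp
next
  case orL from orL.prems show ?case by simp
next
  case orR from orR.prems show ?case by simp
next
  case impL from impL.prems show ?case by simp
next
  case impR from impR.prems show ?case by simp
next
  case allL from allL.prems show ?case by simp
next
  case allR from allR.prems show ?case by simp
next
  case exL from exL.prems show ?case by simp
next
  case exR from exR.prems show ?case by simp
next
  case newR from newR.prems show ?case by simp
next
  case newL from newL.prems show ?case by simp
next
  case (eqR G t \<tau> \<Gamma> \<Delta>)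
  show ?case using eqR.IH[of \<theta>] eqR.prems eqR.hyps(1) by (auto simp: geq_refl)
next
  case (eqS P G \<Gamma> t u \<Delta>)
  have m: "\<forall>A\<in>#\<Gamma> + {#Eq t u, inst P t#}. is_eqfr A \<and> wf_atom S G A" "\<forall>A\<in>#\<Gamma> + {#Eq t u, inst P t#}. sat_eqfr \<theta> A"
    using eqS.prems by auto
  have e1: "is_eqfr (inst P t)" "wf_atom S G (inst P t)" "wf_atom S G (Eq t u)"
    "sat_eqfr \<theta> (Eq t u)" "sat_eqfr \<theta> (inst P t)" using m by auto
  have "is_eqfr (inst P u)" using eqfr_inst e1 by blast
  moreover have "wf_atom S G (inst P u)" using wf_inst[OF eqS.prems(1) e1(3) e1(1) e1(2)] .
  moreover have "sat_eqfr \<theta> (inst P u)" using sat_cong[OF eqS.hyps(1) e1(1) e1(4) e1(5)] .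
  ultimately have "\<forall>A\<in>#\<Gamma> + {#Eq t u, inst P t, inst P u#}. is_eqfr A \<and> wf_atom S G A"
    "\<forall>A\<in>#\<Gamma> + {#Eq t u, inst P t, inst P u#}. sat_eqfr \<theta> A" using m by auto
  thus ?case using eqS.IH[of \<theta>] eqS.prems by blast
next
  case (ax G Ps Qs \<Gamma> \<Delta>)
  have "\<forall>P\<in>set Ps. is_eqfr P \<and> wf_atom S G P \<and> sat_eqfr \<theta> P" using ax.prems by auto
  then obtain Q where Q: "Q \<in> set Qs" "is_eqfr Q" "wf_atom S G Q" "sat_eqfr \<theta> Q"
    using ax_sound[OF ax.hyps(1) ax.prems(4)] by blast
  have f: "\<forall>A\<in>#add_mset Q (\<Gamma> + mset Ps). is_eqfr A \<and> wf_atom S G A"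
    "\<forall>A\<in>#add_mset Q (\<Gamma> + mset Ps). sat_eqfr \<theta> A" using Q ax.prems by auto
  show ?case using ax.IH Q(1) f ax.prems(1,2,4) by blast
next
  case (A2 G \<Gamma> a t b u \<Delta>)
  let ?E = "Eq (Ab a t) (Ab b u)"
  have wE: "wf_atom S G ?E" and sE: "sat_eqfr \<theta> ?E" using A2.prems by auto
  from wE obtain \<nu> \<sigma> where ty: "has_ty S G a (NameT \<nu>)" "has_ty S G t \<sigma>" "has_ty S G b (NameT \<nu>)" "has_ty S G u \<sigma>"
    by auto
  obtain p q where pq: "ev \<theta> a = GNm p" "ev \<theta> b = GNm q"
    using ev_name[OF ty(1) A2.prems(4)] ev_name[OF ty(3) A2.prems(4)] by blast
  have "geq (GAb p (ev \<theta> t)) (GAb q (ev \<theta> u))" using sE pq by simp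
  from gAb_inv[OF this] show ?case
  proof
    assume h: "p = q \<and> geq (ev \<theta> t) (ev \<theta> u)"
    have "\<forall>A\<in>#\<Gamma> + {#?E, Eq a b, Eq t u#}. is_eqfr A \<and> wf_atom S G A"
      using A2.prems ty by auto
    moreover have "\<forall>A\<in>#\<Gamma> + {#?E, Eq a b, Eq t u#}. sat_eqfr \<theta> A"
      using A2.prems h pq by (auto simp: geq_refl)
    ultimately show False using A2.IH(1)[of \<theta>] A2.prems by blast
  next
    assume h: "p \<noteq> q \<and> gfresh p (ev \<theta> u) \<and> geq (ev \<theta> t) (gswap p q (ev \<theta> u))"
    have "\<forall>A\<in>#\<Gamma> + {#?E, Fr a u, Eq t (Swap a b u)#}. is_eqfr A \<and> wf_atom S G A"
      using A2.prems ty by auto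
    moreover have "\<forall>A\<in>#\<Gamma> + {#?E, Fr a u, Eq t (Swap a b u)#}. sat_eqfr \<theta> A"
      using A2.prems h pq by auto
    ultimately show False using A2.IH(2)[of \<theta>] A2.prems by blast
  qed
next
  case (A3 G t \<nu> \<sigma> a x \<Gamma> \<Delta>)
  let ?G' = "G @ [CVar a (NameT \<nu>), CVar x \<sigma>]"
  have gt: "gty S (ev \<theta> t) (AbsT \<nu> \<sigma>)" using ev_gty[OF A3.hyps(1) A3.prems(4)] .
  obtain n g where ng: "ev \<theta> t = GAb n g" "fst n = \<nu>" "gty S g \<sigma>" using gty_AbsT[OF gt] by (elim exE conjE) auto
  define \<theta>' where "\<theta>' = \<theta>(a := GNm n, x := g)"
  have na1: "\<forall>\<tau>. CVar a \<tau> \<notin> set G"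
  proof (intro allI notI)
    fix \<tau> assume "CVar a \<tau> \<in> set G"
    hence "Inl a \<in> csym ` set G" using rev_image_eqI[of "CVar a \<tau>" "set G" "Inl a" csym] by simp
    thus False using A3.hyps(2) unfolding var_in_def by simp
  qed
  have na2: "\<forall>\<tau>. CVar x \<tau> \<notin> set G"
  proof (intro allI notI)
    fix \<tau> assume "CVar x \<tau> \<in> set G"
    hence "Inl x \<in> csym ` set G" using rev_image_eqI[of "CVar x \<tau>" "set G" "Inl x" csym] by simp
    thus False using A3.hyps(3) unfolding var_in_def by simp
  qed
  note na = na1 na2
  have loc: "\<forall>y \<tau>. CVar y \<tau> \<in> set G \<longrightarrow> \<theta> y = \<theta>' y"
    using na unfolding \<theta>'_def by auto
  have sub: "set G \<subseteq> set ?G'" by auto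
  have ok': "ctx_ok ?G'" using A3.prems(1) A3.hyps(2,3,4) unfolding ctx_ok_def var_in_def by auto
  have evt: "ev \<theta>' t = GAb n g" using ev_local[OF A3.hyps(1) loc] ng by simp
  have io': "interp_ok S ?G' \<theta>'"
    unfolding interp_ok_def
  proof (intro conjI allI impI)
    fix y \<tau> assume "CVar y \<tau> \<in> set ?G'"
    hence "CVar y \<tau> \<in> set G \<or> (y = a \<and> \<tau> = NameT \<nu>) \<or> (y = x \<and> \<tau> = \<sigma>)" by auto
    thus "gty S (\<theta>' y) \<tau>"
    proof (elim disjE)
      assume h: "CVar y \<tau> \<in> set G"
      thus ?thesis using loc interp_okD(2)[OF A3.prems(4) h] by metis
    next
      assume "y = a \<and> \<tau> = NameT \<nu>"
      thus ?thesis using A3.hyps(4) ng gty.intros(1)[of S n] unfolding \<theta>'_def by auto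
    next
      assume "y = x \<and> \<tau> = \<sigma>"
      thus ?thesis using ng unfolding \<theta>'_def by auto
    qed
  next
    fix b y assume "(b, Var y) \<in> ctx_fresh S ?G'"
    hence "(b, Var y) \<in> ctx_fresh S ((G @ [CVar a (NameT \<nu>)]) @ [CVar x \<sigma>])" by simp
    hence "(b, Var y) \<in> ctx_fresh S (G @ [CVar a (NameT \<nu>)])" using ctx_fresh_snoc by blast
    hence h: "(b, Var y) \<in> ctx_fresh S G" using ctx_fresh_snoc by blast
    then obtain \<tau> where "CVar y \<tau> \<in> set G" using ctx_fresh_var by blast
    thus "gfresh b (\<theta>' y)" using loc interp_okD(1)[OF A3.prems(4) h] by metis
  qed
  have "\<forall>A\<in>#add_mset (Eq t (Ab (Var a) (Var x))) \<Gamma>. is_eqfr A \<and> wf_atom S ?G' A"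
    using A3.prems(3) wf_weaken[OF _ sub] ty_weaken[OF A3.hyps(1) sub] by auto
  moreover have "\<forall>A\<in>#add_mset (Eq t (Ab (Var a) (Var x))) \<Gamma>. sat_eqfr \<theta>' A"
  proof
    fix A assume "A \<in># add_mset (Eq t (Ab (Var a) (Var x))) \<Gamma>"
    hence "A = Eq t (Ab (Var a) (Var x)) \<or> A \<in># \<Gamma>" by auto
    thus "sat_eqfr \<theta>' A"
    proof
      assume "A = Eq t (Ab (Var a) (Var x))"
      thus ?thesis using evt A3.hyps(4) unfolding \<theta>'_def by (simp add: geq_refl)
    next
      assume "A \<in># \<Gamma>"
      thus ?thesis using sat_local[OF _ loc] A3.prems(3,5) by auto
    qed
  qed
  ultimately show ?case using A3.IH[OF ok' A3.prems(2) _ io'] by blast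
next
  case (Fresh a G \<Gamma> \<Delta>)
  let ?N = "\<Union>e\<in>set G. enames \<theta> e"
  have fN: "finite ?N"
  proof (rule finite_UN_I)
    fix e show "finite (enames \<theta> e)" by (cases e) (auto simp: finite_gnames)
  qed simp
  obtain c where c: "fst c = fst a" "c \<notin> ?N" using fresh_name[OF fN, of "fst a"] by (elim exE conjE) auto
  define \<theta>' where "\<theta>' = (\<lambda>x. gswap a c (\<theta> x))"
  have nms: "\<forall>b. CNm b \<in> set G \<longrightarrow> b \<noteq> a \<and> b \<noteq> c"
  proof (intro allI impI)
    fix b assume h: "CNm b \<in> set G"
    hence "Inr b \<in> csym ` set G" using rev_image_eqI[of "CNm b" "set G" "Inr b" csym] by simp
    hence "b \<noteq> a" using Fresh.hyps(1) unfolding nm_in_def by auto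
    moreover have "b \<in> ?N" using h by force
    ultimately show "b \<noteq> a \<and> b \<noteq> c" using c by auto
  qed
  have cfr: "\<And>y \<tau>. CVar y \<tau> \<in> set G \<Longrightarrow> gfresh c (\<theta> y)"
  proof -
    fix y \<tau> assume "CVar y \<tau> \<in> set G"
    hence "gnames (\<theta> y) \<subseteq> ?N" by force
    thus "gfresh c (\<theta> y)" using c gfresh_notin by blast
  qed
  have sub: "set G \<subseteq> set (G @ [CNm a])" by auto
  have ok': "ctx_ok (G @ [CNm a])" using Fresh.prems(1) Fresh.hyps(1) unfolding ctx_ok_def nm_in_def by auto
  have io': "interp_ok S (G @ [CNm a]) \<theta>'"
    unfolding interp_ok_def
  proof (intro conjI allI impI)
    fix y \<tau> assume "CVar y \<tau> \<in> set (G @ [CNm a])"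
    hence h: "CVar y \<tau> \<in> set G" by auto
    show "gty S (\<theta>' y) \<tau>" using gty_gswap[OF interp_okD(2)[OF Fresh.prems(4) h], of a c] c(1)
      unfolding \<theta>'_def by simp
  next
    fix b y assume "(b, Var y) \<in> ctx_fresh S (G @ [CNm a])"
    hence "(b, Var y) \<in> ctx_fresh S G \<or> (CNm a = CNm b \<and> (\<exists>\<tau>. has_ty S G (Var y) \<tau>))"
      using ctx_fresh_snoc by blast
    thus "gfresh b (\<theta>' y)"
    proof
      assume h: "(b, Var y) \<in> ctx_fresh S G"
      hence "CNm b \<in> set G" using ctx_fresh_ty by blast
      hence "b \<noteq> a \<and> b \<noteq> c" using nms by blast
      hence "b \<noteq> a" "b \<noteq> c" by simp_all
      moreover have "gfresh b (\<theta> y)" using interp_okD(1)[OF Fresh.prems(4) h] .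
      ultimately show ?thesis using gfresh_gswap_iff[of a c b "\<theta> y"] unfolding \<theta>'_def by simp
    next
      assume "CNm a = CNm b \<and> (\<exists>\<tau>. has_ty S G (Var y) \<tau>)"
      then obtain \<tau> where "b = a" "CVar y \<tau> \<in> set G" by auto
      thus ?thesis using cfr gfresh_gswap_iff[of a c c "\<theta> y"] unfolding \<theta>'_def by simp
    qed
  qed
  have "\<forall>A\<in>#\<Gamma>. is_eqfr A \<and> wf_atom S (G @ [CNm a]) A"
    using Fresh.prems(3) wf_weaken[OF _ sub] by auto
  moreover have "\<forall>A\<in>#\<Gamma>. sat_eqfr \<theta>' A"
    using Fresh.prems(3,5) sat_eqvt[OF _ nms] unfolding \<theta>'_def by blast
  ultimately show ?case using Fresh.IH[OF ok' Fresh.prems(2) _ io'] by blast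
next
  case (CtxFr a t G \<Gamma> \<Delta>)
  from ctx_fresh_ty[OF CtxFr.hyps(1)] obtain \<tau> where "CNm a \<in> set G" "has_ty S G t \<tau>" by blast
  hence "wf_atom S G (Fr (Nm a) t)" by auto
  moreover have "sat_eqfr \<theta> (Fr (Nm a) t)"
    using ctx_fresh_fresh[OF CtxFr.hyps(1) CtxFr.prems(1,4)] by simp
  ultimately have "\<forall>A\<in>#add_mset (Fr (Nm a) t) \<Gamma>. is_eqfr A \<and> wf_atom S G A"
    "\<forall>A\<in>#add_mset (Fr (Nm a) t) \<Gamma>. sat_eqfr \<theta> A" using CtxFr.prems by auto
  thus ?case using CtxFr.IH[of \<theta>] CtxFr.prems by blast
qed

theorem mainTheorem8:
  fixes S :: "('c, 'f, 'p, 'd, 'n) sig"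
    and G :: "('d, 'n) ctx"
    and \<Gamma> :: "('c, 'f, 'p, 'd, 'n) fm multiset"
  assumes "ctx_ok G"
    and "\<forall>A \<in># \<Gamma>. is_eqfr A \<and> wf_atom S G A"
    and "deriv S G \<Gamma> {#Bot#}"
  shows "\<not> (\<exists>\<theta>. interp_ok S G \<theta> \<and> (\<forall>A \<in># \<Gamma>. sat_eqfr \<theta> A))"
  using sound[OF assms(3) assms(1) refl assms(2)] by blast


end
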